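(* For every $\delta\in(0,\frac12]$ there exists $\alpha=\alpha(\delta)\in(0,1]$ such that $$\lambda\cdot a_1^{1+\alpha}\cdot(2-a_1x)+a_2^{1+\alpha}\cdot(2-a_2x)\le(1+\lambda)\cdot(2-x)$$ for every $x\ge\delta$ and every $\lambda,y\ge0$ with $\lambda y\le1$, where $a_1=1+y$ and $a_2=1-\lambda y$. *)

theory Defs
  imports Complex_Main
begin

end

theory Submission
  imports Defs "HOL-Analysis.Analysis"
begin

lemma upper_pow:
  fixes t a :: real
  assumes "t > 0" "0 < a" "a \<le> 1"
  shows "t powr a \<le> 1 + a * (t - 1)"
  using Youngs_inequality_0[of a "1 - a" t 1] assms by (simp add: algebra_simps)

lemma lower_pow:
  fixes t a :: real
  assumes "t > 0" "0 < a"
  shows "t * t powr a \<ge> t + a * (t - 1)"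
proof -
  have l: "ln t \<ge> 1 - 1 / t"
    using ln_le_minus_one[of "1/t"] assms by (simp add: ln_div)
  have "t powr a = exp (a * ln t)" using assms by (simp add: powr_def)
  also have "\<dots> \<ge> 1 + a * ln t" by (rule exp_ge_add_one_self)
  finally have "t powr a \<ge> 1 + a * (1 - 1/t)"
    using l assms by (smt (verit) mult_left_mono)
  hence "t * t powr a \<ge> t * (1 + a * (1 - 1/t))"
    using assms by (simp add: mult_left_mono)
  also have "t * (1 + a * (1 - 1/t)) = t + a * (t - 1)"
    using assms by (simp add: field_simps)
  finally show ?thesis .
qed

lemma pointwise:
  fixes t x a :: real
  assumes t: "t \<ge> 0" and x: "x > 0" and a: "0 < a" "4 * a \<le> x" "a \<le> 1"
  shows "t powr (1 + a) * (2 - t * x) \<le> (2 - x) + (2 * (1 + a) - x * (2 + a)) * (t - 1)"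
proof (cases "t = 0")
  case True
  have "a * x \<ge> 0" using assms by simp
  then show ?thesis using assms True by (simp add: algebra_simps, linarith)
next
  case False
  hence tp: "t > 0" using t by simp
  define u where "u = t powr a"
  have eq: "t powr (1 + a) = t * u"
    using tp by (simp add: u_def powr_add)
  show ?thesis
  proof (cases "t * x \<ge> 2")
    case True
    have lb: "t * u \<ge> t + a * (t - 1)" using lower_pow[OF tp a(1)] by (simp add: u_def)
    have "t * u * (2 - t * x) \<le> (t + a * (t - 1)) * (2 - t * x)"
      using lb True by (simp add: mult_right_mono_neg)
    also have "\<dots> = (2 - x) + (2 * (1 + a) - x * (2 + a)) * (t - 1) - x * (1 + a) * (t - 1)^2"
      by (simp add: algebra_simps power2_eq_square)
    also have "\<dots> \<le> (2 - x) + (2 * (1 + a) - x * (2 + a)) * (t - 1)"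
      using x a by simp
    finally show ?thesis using eq by simp
  next
    case False
    have ub: "u \<le> 1 + a * (t - 1)" using upper_pow[OF tp a(1) a(3)] by (simp add: u_def)
    have "t * u * (2 - t * x) \<le> t * (1 + a * (t - 1)) * (2 - t * x)"
      using ub False tp by (intro mult_right_mono mult_left_mono) auto
    also have "\<dots> = (2 - x) + (2 * (1 + a) - x * (2 + a)) * (t - 1)
        - (t - 1)^2 * (x + a * x - 2 * a + a * x * t)"
      by (simp add: algebra_simps power2_eq_square)
    also have "\<dots> \<le> (2 - x) + (2 * (1 + a) - x * (2 + a)) * (t - 1)"
    proof -
      have "x + a * x - 2 * a + a * x * t \<ge> 0"
        using x a tp by (smt (verit) mult_nonneg_nonneg mult_pos_pos)
      thus ?thesis by simp
    qed
    finally show ?thesis using eq by simp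
  qed
qed

theorem lemma2p21:
  fixes \<delta> :: real
  assumes "0 < \<delta>" and "\<delta> \<le> 1/2"
  shows "\<exists>\<alpha>::real. 0 < \<alpha> \<and> \<alpha> \<le> 1 \<and>
    (\<forall>x l y :: real. x \<ge> \<delta> \<longrightarrow> l \<ge> 0 \<longrightarrow> y \<ge> 0 \<longrightarrow> l * y \<le> 1 \<longrightarrow>
      l * (1 + y) powr (1 + \<alpha>) * (2 - (1 + y) * x)
        + (1 - l * y) powr (1 + \<alpha>) * (2 - (1 - l * y) * x)
      \<le> (1 + l) * (2 - x))"
proof (intro exI conjI allI impI)
  show "0 < \<delta> / 4" "\<delta> / 4 \<le> 1" using assms by auto
  fix x l y :: real
  assume h: "x \<ge> \<delta>" "l \<ge> 0" "y \<ge> 0" "l * y \<le> 1"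
  define D where "D = 2 * (1 + \<delta>/4) - x * (2 + \<delta>/4)"
  have p1: "(1 + y) powr (1 + \<delta>/4) * (2 - (1 + y) * x) \<le> (2 - x) + D * ((1 + y) - 1)"
    unfolding D_def using h assms by (intro pointwise) auto
  have p2: "(1 - l * y) powr (1 + \<delta>/4) * (2 - (1 - l * y) * x) \<le> (2 - x) + D * ((1 - l * y) - 1)"
    unfolding D_def using h assms by (intro pointwise) auto
  have "l * (1 + y) powr (1 + \<delta>/4) * (2 - (1 + y) * x) \<le> l * ((2 - x) + D * ((1 + y) - 1))"
    using p1 h(2) by (simp add: mult.assoc mult_left_mono)
  with p2 show "l * (1 + y) powr (1 + \<delta>/4) * (2 - (1 + y) * x)
        + (1 - l * y) powr (1 + \<delta>/4) * (2 - (1 - l * y) * x)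
      \<le> (1 + l) * (2 - x)" by (simp add: algebra_simps)
qed

end
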